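(* Let $n$ be even, $V=V_1\sqcup V_2$ with $|V_1|=|V_2|=n/2$, and $0\le q<p\le 1$. Consider the complete weighted graph on $V$ with $w(u,v)=p$ for distinct $u,v$ in the same block, $w(u,v)=q$ for $u,v$ in different blocks, and $w(v,v)=0$. Let $\mathcal P$ be the set of all cuts $\{A,A^\complement\}$ with $A\subseteq V$, with cost $c(\{A,A^\complement\})=\sum_{u\in A,v\in A^\complement}w(u,v)$, and for $\Psi\in\mathbb R$ let $\mathcal P_\Psi=\{P\in\mathcal P: c(P)\le\Psi\}$. Let $a\in\mathbb N$ be the agreement parameter, and assume $a\ge 2$ and $p>3qn/(n-2a)$. Let $\xi=1+q/p$. If $$q\Bigl(\frac n2\Bigr)^2\le\Psi<\frac{n^2}{4}\,p\Bigl(\frac13\xi\Bigl(\xi-\frac{2a}{n}\Bigr)-\frac19\Bigl(\xi-\frac{2a}{n}\Bigr)^2\Bigr),$$ then the two orientations of $\mathcal P_\Psi$ induced by the blocks $V_1$ and $V_2$ are distinct, and they are exactly the $\mathcal P_\Psi$-tangles.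
   Context: An orientation of a set of cuts chooses one side of every cut in it. An orientation $O$ of $\mathcal P_\Psi$ is a $\mathcal P_\Psi$-tangle if for all (not necessarily distinct) chosen sides $A,B,C\in O$ we have $|A\cap B\cap C|\ge a$. The orientation induced by block $V_i$ picks from every cut $\{A,A^\complement\}$ the side containing the majority of the vertices of $V_i$. *)

theory Defs
  imports Complex_Main
begin

definition sbm_weight :: "'v set \<Rightarrow> 'v set \<Rightarrow> real \<Rightarrow> real \<Rightarrow> 'v \<Rightarrow> 'v \<Rightarrow> real" where
  "sbm_weight V1 V2 p q u v =
     (if u = v then 0
      else if (u \<in> V1 \<and> v \<in> V1) \<or> (u \<in> V2 \<and> v \<in> V2) then p else q)"

definition cut_cost :: "'v set \<Rightarrow> ('v \<Rightarrow> 'v \<Rightarrow> real) \<Rightarrow> 'v set \<Rightarrow> real" where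
  "cut_cost V w A = (\<Sum>u\<in>A. \<Sum>v\<in>V - A. w u v)"

text \<open>All sides of cuts in P_Psi: a cut {A, V-A} is represented by its two sides.\<close>
definition psi_sides :: "'v set \<Rightarrow> ('v \<Rightarrow> 'v \<Rightarrow> real) \<Rightarrow> real \<Rightarrow> 'v set set" where
  "psi_sides V w \<Psi> = {A. A \<subseteq> V \<and> cut_cost V w A \<le> \<Psi>}"

definition is_orientation :: "'v set \<Rightarrow> 'v set set \<Rightarrow> 'v set set \<Rightarrow> bool" where
  "is_orientation V S Or \<longleftrightarrow> Or \<subseteq> S \<and> (\<forall>A\<in>S. (A \<in> Or) \<noteq> (V - A \<in> Or))"

definition is_tangle :: "'v set \<Rightarrow> 'v set set \<Rightarrow> nat \<Rightarrow> 'v set set \<Rightarrow> bool" where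
  "is_tangle V S a Or \<longleftrightarrow> is_orientation V S Or \<and>
     (\<forall>A\<in>Or. \<forall>B\<in>Or. \<forall>C\<in>Or. card (A \<inter> B \<inter> C) \<ge> a)"

definition induced_orientation :: "'v set set \<Rightarrow> 'v set \<Rightarrow> 'v set set" where
  "induced_orientation S B = {A \<in> S. 2 * card (A \<inter> B) > card B}"

end

theory Submission imports Defs begin

definition cf :: "real \<Rightarrow> real \<Rightarrow> real \<Rightarrow> real \<Rightarrow> real \<Rightarrow> real" where
  "cf p q m x y = p*(x*(m-x) + y*(m-y)) + q*(x*(m-y) + y*(m-x))"

lemma conc:
  fixes f :: "real \<Rightarrow> real"
  assumes f: "\<And>t. f t = cA + cB*t - cC*t^2" and cC: "cC \<ge> 0"
    and t: "t0 \<le> t" "t \<le> t1" and L: "f t0 \<ge> L" "f t1 \<ge> L"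
  shows "f t \<ge> L"
proof (cases "t0 = t1")
  case True
  then have "t = t0" using t by auto
  then show ?thesis using L by simp
next
  case False
  hence lt: "t0 < t1" using t by auto
  have id: "(t1 - t0) * f t = (t1 - t) * f t0 + (t - t0) * f t1 + cC*((t - t0)*(t1 - t)*(t1 - t0))"
    unfolding f by (simp add: algebra_simps power2_eq_square)
  have 1: "(t1 - t) * f t0 \<ge> (t1 - t) * L" using t L by (intro mult_left_mono) auto
  have 2: "(t - t0) * f t1 \<ge> (t - t0) * L" using t L by (intro mult_left_mono) auto
  have 3: "cC*((t - t0)*(t1 - t)*(t1 - t0)) \<ge> 0" using t cC lt by simp
  have "(t1 - t0) * f t \<ge> (t1 - t0) * L"
    using id 1 2 3 by (simp add: algebra_simps)
  then show ?thesis using lt by simp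
qed

lemma polygon:
  fixes p q m a R x y :: real
  assumes q0: "0 \<le> q" and qp: "q < p" and qm: "q*m = p*R" and R0: "0 \<le> R"
    and R1: "3*R < m - a" and a0: "0 \<le> a"
    and x1: "m \<le> 2*x" and x2: "x \<le> m" and y1: "0 \<le> y" and y2: "y \<le> m"
    and d: "(m + R - a)/3 \<le> 2*m - x - y" and e: "(m - a - 2*R)/3 \<le> m - x + y"
  shows "cf p q m x y \<ge> p*(m+R-a)*(2*m+2*R+a)/9"
proof -
  define K where "K = (m + R - a)/3"
  define H where "H = (m - a - 2*R)/3"
  define G where "G = p*(m+R-a)*(2*m+2*R+a)/9"
  define al where "al = m - x"
  have p0: "p > 0" using q0 qp by linarith
  have GK: "K*(p*(m-K) + q*m) = G"
  proof -
    have "K*(p*(m-K) + q*m) = K*(p*(m-K) + p*R)" by (simp add: qm)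
    also have "\<dots> = G" unfolding K_def G_def by (simp add: field_simps; simp add: algebra_simps)
    finally show ?thesis .
  qed
  have GH: "(m-H)*(p*H + q*m) = G"
  proof -
    have "(m-H)*(p*H + q*m) = (m-H)*(p*H + p*R)" by (simp add: qm)
    also have "\<dots> = G" unfolding H_def G_def by (simp add: field_simps; simp add: algebra_simps)
    finally show ?thesis .
  qed
  have I1: "\<And>y. cf p q m x y = (al + (m-y))*(p*(m - (al + (m-y))) + q*m) + 2*(p-q)*al*(m-y)"
    unfolding cf_def al_def by (simp add: algebra_simps)
  have I2: "\<And>y. cf p q m x y = (m - (al+y))*(p*(al+y) + q*m) + 2*(p+q)*al*y"
    unfolding cf_def al_def by (simp add: algebra_simps)
  have al0: "0 \<le> al" and al1: "2*al \<le> m" using x1 x2 unfolding al_def by auto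
  define y0 where "y0 = max 0 (H - al)"
  define y1' where "y1' = min m (m - K + al)"
  have yy0: "y0 \<le> y" using e y1 unfolding y0_def H_def al_def by (auto simp: field_simps)
  have yy1: "y \<le> y1'" using d y2 unfolding y1'_def K_def al_def by (auto simp: field_simps)
  have hc0: "cf p q m x y0 \<ge> G"
  proof (cases "al \<le> H")
    case True
    hence "y0 = H - al" unfolding y0_def by auto
    hence "cf p q m x y0 = G + 2*(p+q)*al*(H - al)" using I2[of y0] GH by simp
    moreover have "2*(p+q)*al*(H - al) \<ge> 0" using True al0 p0 q0 by simp
    ultimately show ?thesis by linarith
  next
    case False
    hence "y0 = 0" unfolding y0_def by auto
    hence "cf p q m x y0 = (m - al)*(p*al + q*m)" using I2[of y0] by simp
    also have "\<dots> = G + (al - H)*(p*(m - al - H - R))"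
      using GH[symmetric] qm by (simp add: algebra_simps)
    finally have eq: "cf p q m x y0 = G + (al - H)*(p*(m - al - H - R))" .
    have "m - al - H - R \<ge> 0" using al1 R1 R0 a0 unfolding H_def by (simp add: field_simps)
    hence "(al - H)*(p*(m - al - H - R)) \<ge> 0" using False p0 by simp
    then show ?thesis using eq by linarith
  qed
  have hc1: "cf p q m x y1' \<ge> G"
  proof (cases "al \<le> K")
    case True
    hence "y1' = m - K + al" using al0 unfolding y1'_def by auto
    hence "cf p q m x y1' = G + 2*(p-q)*al*(K - al)" using I1[of y1'] GK by simp
    moreover have "2*(p-q)*al*(K - al) \<ge> 0" using True al0 qp by simp
    ultimately show ?thesis by linarith
  next
    case False
    hence "y1' = m" unfolding y1'_def by auto
    hence "cf p q m x y1' = al*(p*(m - al) + q*m)" using I1[of y1'] by simp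
    also have "\<dots> = G + (al - K)*(p*(m - al - K) + q*m)"
      using GK[symmetric] by (simp add: algebra_simps)
    finally have eq: "cf p q m x y1' = G + (al - K)*(p*(m - al - K) + q*m)" .
    have "m - al - K \<ge> 0" using al1 R1 R0 a0 unfolding K_def by (simp add: field_simps)
    hence "(al - K)*(p*(m - al - K) + q*m) \<ge> 0" using False p0 q0 R1 R0 a0
      by (intro mult_nonneg_nonneg) auto
    then show ?thesis using eq by linarith
  qed
  have "cf p q m x y \<ge> G"
    by (rule conc[where f="\<lambda>t. cf p q m x t" and cA="p*x*(m-x) + q*x*m"
          and cB="p*m + q*m - 2*q*x" and cC=p, OF _ _ yy0 yy1 hc0 hc1])
       (auto simp: cf_def algebra_simps power2_eq_square p0 less_imp_le)
  then show ?thesis unfolding G_def .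
qed


lemma monoF:
  fixes p q m u v u' v' :: real
  assumes "0 \<le> q" "q < p" "0 \<le> u'" "u' \<le> u" "0 \<le> v'" "v' \<le> v" "2*u \<le> m" "2*v \<le> m"
  shows "cf p q m (m-u') (m-v') \<le> cf p q m (m-u) (m-v)"
proof -
  have e1: "cf p q m (m-u) (m-v) - cf p q m (m-u') (m-v) = (u-u')*(p*(m-u-u') + q*(m-2*v))"
    unfolding cf_def by (simp add: algebra_simps)
  have e2: "cf p q m (m-u') (m-v) - cf p q m (m-u') (m-v') = (v-v')*(p*(m-v-v') + q*(m-2*u'))"
    unfolding cf_def by (simp add: algebra_simps)
  have "(u-u')*(p*(m-u-u') + q*(m-2*v)) \<ge> 0" using assms by (intro mult_nonneg_nonneg add_nonneg_nonneg) auto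
  moreover have "(v-v')*(p*(m-v-v') + q*(m-2*u')) \<ge> 0" using assms by (intro mult_nonneg_nonneg add_nonneg_nonneg) auto
  ultimately show ?thesis using e1 e2 by linarith
qed

lemma monoH:
  fixes p q m a R t al y :: real
  assumes q0: "0 \<le> q" and qp: "q < p" and qm: "q*m = p*R" and R0: "0 \<le> R" and a0: "0 \<le> a"
    and t: "0 \<le> t" "t \<le> al" and y: "0 \<le> y" and e: "3*(al + y) \<le> m - a - 2*R"
  shows "cf p q m (m-t) 0 \<le> cf p q m (m-al) y"
proof -
  have e0: "cf p q m (m-al) y - cf p q m (m-t) 0 = (al + y - t)*(p*(m - (al+y) - t) - q*m) + 2*(p+q)*al*y"
    unfolding cf_def by (simp add: algebra_simps)
  have "p*(m - (al+y) - t) - q*m = p*(m - (al+y) - t - R)" using qm by (simp add: algebra_simps)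
  with e0 have e1: "cf p q m (m-al) y - cf p q m (m-t) 0 = (al + y - t)*(p*(m - (al+y) - t - R)) + 2*(p+q)*al*y"
    by simp
  have "m - (al+y) - t - R \<ge> 0" using t y e R0 a0 by argo
  hence "(al + y - t)*(p*(m - (al+y) - t - R)) \<ge> 0" using assms by (intro mult_nonneg_nonneg) auto
  moreover have "2*(p+q)*al*y \<ge> 0" using assms by simp
  ultimately show ?thesis using e1 by linarith
qed


locale sbm =
  fixes V1 V2 :: "'v set" and p q Psi R :: real and m a :: nat
  assumes fin1: "finite V1" and fin2: "finite V2" and disj: "V1 \<inter> V2 = {}"
    and c1: "card V1 = m" and c2: "card V2 = m"
    and q0: "0 \<le> q" and qp: "q < p" and a2: "2 \<le> a"
    and qm: "q * real m = p * R" and R0: "0 \<le> R" and R1: "3*R < real m - real a"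
    and Psi1: "q * (real m)^2 \<le> Psi"
    and Psi2: "Psi < p*(real m+R-real a)*(2*real m+2*R+real a)/9"
begin

abbreviation "V \<equiv> V1 \<union> V2"
abbreviation "w \<equiv> sbm_weight V1 V2 p q"
abbreviation "S \<equiv> psi_sides V w Psi"
abbreviation "O1 \<equiv> induced_orientation S V1"
abbreviation "K \<equiv> (real m + R - real a)/3"
abbreviation "HH \<equiv> (real m - real a - 2*R)/3"

lemma finV: "finite V" using fin1 fin2 by simp

lemma diffV1: "real (card (V1 - A)) = real m - real (card (A \<inter> V1))"
proof -
  have h: "card (V1 \<inter> A) + card (V1 - A) = m" using card_Int_Diff[OF fin1, of A] c1 by simp
  have "A \<inter> V1 = V1 \<inter> A" by blast
  with h show ?thesis by (metis add_diff_cancel_left' le_add1 of_nat_diff)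
qed

lemma diffV2: "real (card (V2 - A)) = real m - real (card (A \<inter> V2))"
proof -
  have h: "card (V2 \<inter> A) + card (V2 - A) = m" using card_Int_Diff[OF fin2, of A] c2 by simp
  have "A \<inter> V2 = V2 \<inter> A" by blast
  with h show ?thesis by (metis add_diff_cancel_left' le_add1 of_nat_diff)
qed

lemma cardVA: "real (card (V - A)) = real (card (V1 - A)) + real (card (V2 - A))"
proof -
  have "V - A = (V1 - A) \<union> (V2 - A)" by blast
  moreover have "card ((V1 - A) \<union> (V2 - A)) = card (V1 - A) + card (V2 - A)"
    using fin1 fin2 disj by (intro card_Un_disjoint) auto
  ultimately show ?thesis by simp
qed

lemma cost: assumes A: "A \<subseteq> V"
  shows "cut_cost V w A = cf p q m (card (A \<inter> V1)) (card (A \<inter> V2))"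
proof -
  have VA: "V - A = (V1 - A) \<union> (V2 - A)" by blast
  have in1: "(\<Sum>v\<in>V-A. w u v) = p*card(V1-A) + q*card(V2-A)" if u: "u \<in> A \<inter> V1" for u
  proof -
    have "(\<Sum>v\<in>V-A. w u v) = (\<Sum>v\<in>V1-A. w u v) + (\<Sum>v\<in>V2-A. w u v)"
      unfolding VA using fin1 fin2 disj by (intro sum.union_disjoint) auto
    also have "(\<Sum>v\<in>V1-A. w u v) = (\<Sum>v\<in>V1-A. p)" using u by (intro sum.cong) (auto simp: sbm_weight_def)
    also have "(\<Sum>v\<in>V2-A. w u v) = (\<Sum>v\<in>V2-A. q)" using u disj by (intro sum.cong) (auto simp: sbm_weight_def)
    finally show ?thesis by simp
  qed
  have in2: "(\<Sum>v\<in>V-A. w u v) = q*card(V1-A) + p*card(V2-A)" if u: "u \<in> A \<inter> V2" for u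
  proof -
    have "(\<Sum>v\<in>V-A. w u v) = (\<Sum>v\<in>V1-A. w u v) + (\<Sum>v\<in>V2-A. w u v)"
      unfolding VA using fin1 fin2 disj by (intro sum.union_disjoint) auto
    also have "(\<Sum>v\<in>V1-A. w u v) = (\<Sum>v\<in>V1-A. q)" using u disj by (intro sum.cong) (auto simp: sbm_weight_def)
    also have "(\<Sum>v\<in>V2-A. w u v) = (\<Sum>v\<in>V2-A. p)" using u by (intro sum.cong) (auto simp: sbm_weight_def)
    finally show ?thesis by simp
  qed
  have AA: "(A \<inter> V1) \<union> (A \<inter> V2) = A" using A by blast
  have "cut_cost V w A = (\<Sum>u\<in>(A \<inter> V1) \<union> (A \<inter> V2). \<Sum>v\<in>V-A. w u v)"
    unfolding cut_cost_def AA ..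
  also have "\<dots> = (\<Sum>u\<in>A \<inter> V1. \<Sum>v\<in>V-A. w u v) + (\<Sum>u\<in>A \<inter> V2. \<Sum>v\<in>V-A. w u v)"
    using fin1 fin2 disj by (intro sum.union_disjoint) auto
  also have "(\<Sum>u\<in>A \<inter> V1. \<Sum>v\<in>V-A. w u v) = (\<Sum>u\<in>A \<inter> V1. p*card(V1-A) + q*card(V2-A))"
    using in1 by (rule sum.cong[OF refl])
  also have "(\<Sum>u\<in>A \<inter> V2. \<Sum>v\<in>V-A. w u v) = (\<Sum>u\<in>A \<inter> V2. q*card(V1-A) + p*card(V2-A))"
    using in2 by (rule sum.cong[OF refl])
  finally have "cut_cost V w A = card (A \<inter> V1) * (p*card(V1-A) + q*card(V2-A))
      + card (A \<inter> V2) * (q*card(V1-A) + p*card(V2-A))" by simp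
  then show ?thesis unfolding diffV1 diffV2 cf_def by (simp add: algebra_simps)
qed


lemma am: "a < m" using R0 R1 by linarith
lemma p0: "p > 0" using q0 qp by linarith

lemma le1: "card (A \<inter> V1) \<le> m" using c1 fin1 by (metis card_mono inf_le2)
lemma le2: "card (A \<inter> V2) \<le> m" using c2 fin2 by (metis card_mono inf_le2)

lemma inS: "A \<in> S \<longleftrightarrow> A \<subseteq> V \<and> cf p q m (card (A \<inter> V1)) (card (A \<inter> V2)) \<le> Psi"
  unfolding psi_sides_def using cost by auto

lemma compl_S: assumes "A \<in> S" shows "V - A \<in> S"
proof -
  have A: "A \<subseteq> V" using assms unfolding psi_sides_def by auto
  have e1: "(V - A) \<inter> V1 = V1 - A" "(V - A) \<inter> V2 = V2 - A" by auto
  have "cf p q m (card ((V-A) \<inter> V1)) (card ((V-A) \<inter> V2)) = cf p q m (card (A \<inter> V1)) (card (A \<inter> V2))"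
    unfolding e1 diffV1 diffV2 cf_def by (simp add: algebra_simps)
  then show ?thesis using assms inS by auto
qed

lemma dich: assumes "A \<in> S" "real m \<le> 2 * real (card (A \<inter> V1))"
  shows "real (card (V - A)) < K \<or> real (card (V1 - A)) + real (card (A \<inter> V2)) < HH"
proof (rule ccontr)
  assume c: "\<not> ?thesis"
  have cst: "cf p q m (card (A \<inter> V1)) (card (A \<inter> V2)) \<le> Psi" using assms inS by auto
  have "cf p q m (card (A \<inter> V1)) (card (A \<inter> V2)) \<ge> p*(real m+R-real a)*(2*real m+2*R+real a)/9"
  proof (rule polygon[OF q0 qp qm R0 R1])
    show "0 \<le> real a" by simp
    show "real m \<le> 2 * real (card (A \<inter> V1))" by fact
    show "real (card (A \<inter> V1)) \<le> real m" using le1 by simp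
    show "0 \<le> real (card (A \<inter> V2))" by simp
    show "real (card (A \<inter> V2)) \<le> real m" using le2 by simp
    show "(real m + R - real a)/3 \<le> 2*real m - real (card (A \<inter> V1)) - real (card (A \<inter> V2))"
      using c cardVA diffV1 diffV2 by (simp add: not_less)
    show "(real m - real a - 2*R)/3 \<le> real m - real (card (A \<inter> V1)) + real (card (A \<inter> V2))"
      using c diffV1 by (simp add: not_less)
  qed
  then show False using cst Psi2 by linarith
qed

lemma KH: "HH \<le> K" "K < real m / 2" "2*HH \<le> real m" using R0 R1 by (auto simp: field_simps)

lemma O1_orient: "is_orientation V S O1"
  unfolding is_orientation_def
proof (intro conjI ballI)
  show "O1 \<subseteq> S" unfolding induced_orientation_def by auto
next
  fix A assume AS: "A \<in> S"
  have A: "A \<subseteq> V" using AS unfolding psi_sides_def by auto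
  have cS: "V - A \<in> S" using compl_S[OF AS] .
  have e1: "(V - A) \<inter> V1 = V1 - A" by auto
  have r1: "real (card ((V - A) \<inter> V1)) = real m - real (card (A \<inter> V1))" using e1 diffV1 by simp
  have ne: "2 * card (A \<inter> V1) \<noteq> m"
  proof
    assume h: "2 * card (A \<inter> V1) = m"
    hence hr: "real m = 2 * real (card (A \<inter> V1))" by (metis of_nat_mult of_nat_numeral)
    from dich[OF AS] hr have "real (card (V - A)) < K \<or> real (card (V1 - A)) + real (card (A \<inter> V2)) < HH" by simp
    moreover have "real (card (V - A)) \<ge> real (card (V1 - A))" using cardVA by simp
    moreover have "real (card (V1 - A)) = real m / 2" using diffV1 hr by simp
    ultimately show False using KH by (auto simp: not_less)
  qed
  have "(2 * card (A \<inter> V1) > m) \<noteq> (2 * card ((V - A) \<inter> V1) > m)"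
  proof -
    have "real (2 * card (A \<inter> V1)) \<noteq> real m" using ne by (metis of_nat_eq_iff)
    then show ?thesis using r1 by auto
  qed
  then show "(A \<in> O1) \<noteq> (V - A \<in> O1)" unfolding induced_orientation_def using AS cS c1 by auto
qed


lemma type_facts: assumes "A \<in> O1"
  shows "A \<in> S" "real (card (V1 - A)) \<le> real (card (V - A))"
    "real (card (V - A)) < K \<or> real (card (V1 - A)) < HH"
proof -
  show AS: "A \<in> S" using assms unfolding induced_orientation_def by auto
  have "2 * card (A \<inter> V1) > m" using assms c1 unfolding induced_orientation_def by auto
  hence "real m \<le> 2 * real (card (A \<inter> V1))" by linarith
  from dich[OF AS this] show "real (card (V - A)) < K \<or> real (card (V1 - A)) < HH" by auto
  show "real (card (V1 - A)) \<le> real (card (V - A))" using cardVA by simp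
qed

lemma O1_tangle: "is_tangle V S a O1"
  unfolding is_tangle_def
proof (intro conjI O1_orient ballI)
  fix A B C assume ABC: "A \<in> O1" "B \<in> O1" "C \<in> O1"
  have sub: "A \<subseteq> V" "B \<subseteq> V" "C \<subseteq> V" using ABC unfolding induced_orientation_def psi_sides_def by auto
  have fI: "finite (A \<inter> B \<inter> C)" using sub finV by (meson finite_subset inf.coboundedI1)
  have b1: "real (card (A \<inter> B \<inter> C)) \<ge> 2*real m - card (V - A) - card (V - B) - card (V - C)"
  proof -
    have u: "V - (A \<inter> B \<inter> C) = (V - A) \<union> (V - B) \<union> (V - C)" by blast
    have "card V = card (A \<inter> B \<inter> C) + card (V - (A \<inter> B \<inter> C))"
      using card_Int_Diff[OF finV, of "A \<inter> B \<inter> C"] sub by (simp add: Int_absorb1 inf.coboundedI1)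
    hence e: "card V = card (A \<inter> B \<inter> C) + card ((V - A) \<union> (V - B) \<union> (V - C))" unfolding u .
    moreover have "card V = 2*m" using card_Un_disjoint[OF fin1 fin2 disj] c1 c2 by simp
    moreover have "card ((V - A) \<union> (V - B) \<union> (V - C)) \<le> card (V - A) + card (V - B) + card (V - C)"
      by (metis (no_types, lifting) add_le_mono card_Un_le le_trans order_refl)
    ultimately have h: "2*m \<le> card (A \<inter> B \<inter> C) + (card (V - A) + card (V - B) + card (V - C))" by linarith
    have "real (2*m) \<le> real (card (A \<inter> B \<inter> C) + (card (V - A) + card (V - B) + card (V - C)))"
      using h by (rule of_nat_mono)
    then show ?thesis by simp
  qed
  have b2: "real (card (A \<inter> B \<inter> C)) \<ge> real m - card (V1 - A) - card (V1 - B) - card (V1 - C)"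
  proof -
    define U where "U = (V1 - A) \<union> (V1 - B) \<union> (V1 - C)"
    have "V1 - U \<subseteq> A \<inter> B \<inter> C" unfolding U_def by blast
    hence k1: "card (V1 - U) \<le> card (A \<inter> B \<inter> C)"
      using fI by (rule card_mono[rotated])
    have fU: "finite U" unfolding U_def using fin1 by auto
    have k2: "card V1 = card (V1 \<inter> U) + card (V1 - U)" using card_Int_Diff[OF fin1, of U] .
    have k3: "card (V1 \<inter> U) \<le> card U" using fU by (intro card_mono) auto
    have k4: "card U \<le> card (V1 - A) + card (V1 - B) + card (V1 - C)"
      unfolding U_def by (metis (no_types, lifting) add_le_mono card_Un_le le_trans order_refl)
    have h: "m \<le> card (A \<inter> B \<inter> C) + (card (V1 - A) + card (V1 - B) + card (V1 - C))"
      using k1 k2 k3 k4 c1 by linarith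
    have "real m \<le> real (card (A \<inter> B \<inter> C) + (card (V1 - A) + card (V1 - B) + card (V1 - C)))"
      using h by (rule of_nat_mono)
    then show ?thesis by simp
  qed
  note tA = type_facts[OF ABC(1)] and tB = type_facts[OF ABC(2)] and tC = type_facts[OF ABC(3)]
  have "real (card (A \<inter> B \<inter> C)) \<ge> real a"
    using b1 b2 tA(2,3) tB(2,3) tC(2,3) KH R0 R1 by (auto simp: field_simps)
  then show "a \<le> card (A \<inter> B \<inter> C)" by simp
qed

lemma mono_setF: assumes "A \<subseteq> X" "X \<subseteq> V" "real (card (V - A)) < K"
  shows "cf p q m (card (X \<inter> V1)) (card (X \<inter> V2)) \<le> cf p q m (card (A \<inter> V1)) (card (A \<inter> V2))"
proof -
  have u: "card (V1 - X) \<le> card (V1 - A)" using assms fin1 by (intro card_mono) auto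
  have v: "card (V2 - X) \<le> card (V2 - A)" using assms fin2 by (intro card_mono) auto
  have "real (card (V1 - A)) \<le> real (card (V - A))" "real (card (V2 - A)) \<le> real (card (V - A))"
    using cardVA by auto
  hence uv: "2 * real (card (V1 - A)) \<le> real m" "2 * real (card (V2 - A)) \<le> real m"
    using assms(3) KH by linarith+
  have "cf p q m (real m - card (V1 - X)) (real m - card (V2 - X)) \<le> cf p q m (real m - card (V1 - A)) (real m - card (V2 - A))"
    using u v uv q0 qp by (intro monoF) auto
  then show ?thesis using diffV1 diffV2 by (simp add: algebra_simps)
qed

lemma mono_setH: assumes "X \<subseteq> V1" "card (V1 - X) \<le> card (V1 - A)"
    "real (card (V1 - A)) + real (card (A \<inter> V2)) < HH"
  shows "cf p q m (card (X \<inter> V1)) (card (X \<inter> V2)) \<le> cf p q m (card (A \<inter> V1)) (card (A \<inter> V2))"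
proof -
  have X2: "X \<inter> V2 = {}" using assms(1) disj by blast
  have "cf p q m (real m - card (V1 - X)) 0 \<le> cf p q m (real m - card (V1 - A)) (card (A \<inter> V2))"
  proof (rule monoH[OF q0 qp qm R0])
    show "0 \<le> real a" by simp
    show "0 \<le> real (card (V1 - X))" by simp
    show "real (card (V1 - X)) \<le> real (card (V1 - A))" using assms(2) by simp
    show "0 \<le> real (card (A \<inter> V2))" by simp
    show "3 * (real (card (V1 - A)) + real (card (A \<inter> V2))) \<le> real m - real a - 2 * R"
      using assms(3) by (simp add: field_simps)
  qed
  then show ?thesis using diffV1 diffV2 X2 by (simp add: algebra_simps)
qed

lemma F_in: assumes T: "is_tangle V S a Or"
  shows "A \<in> S \<Longrightarrow> real (card (V - A)) < K \<Longrightarrow> A \<in> Or"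
proof (induction "card (V - A)" arbitrary: A rule: less_induct)
  case (less A)
  have orient: "is_orientation V S Or" and tri: "\<And>X Y Z. X \<in> Or \<Longrightarrow> Y \<in> Or \<Longrightarrow> Z \<in> Or \<Longrightarrow> a \<le> card (X \<inter> Y \<inter> Z)"
    using T unfolding is_tangle_def by auto
  show ?case
  proof (rule ccontr)
    assume nA: "A \<notin> Or"
    have D: "V - A \<in> Or" using orient less.prems nA unfolding is_orientation_def by blast
    have A: "A \<subseteq> V" and cA: "cf p q m (card (A \<inter> V1)) (card (A \<inter> V2)) \<le> Psi" using less.prems inS by auto
    show False
    proof (cases "card (V - A) \<le> 1")
      case True
      have "a \<le> card ((V - A) \<inter> (V - A) \<inter> (V - A))" using tri[OF D D D] .
      then show False using True a2 by simp
    next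
      case False
      then obtain z where z: "z \<in> V - A" by (metis card.empty empty_iff le0 not_less_eq_eq One_nat_def ex_in_conv)
      define B where "B = V - {z}"
      define C where "C = A \<union> {z}"
      have AB: "A \<subseteq> B" "B \<subseteq> V" using A z unfolding B_def by auto
      have AC: "A \<subseteq> C" "C \<subseteq> V" using A z unfolding C_def by auto
      have BS: "B \<in> S" unfolding inS
        using mono_setF[OF AB less.prems(2)] AB cA by auto
      have CS: "C \<in> S" unfolding inS
        using mono_setF[OF AC less.prems(2)] AC cA by auto
      have VB: "V - B = {z}" using z unfolding B_def by auto
      have VC: "V - C = (V - A) - {z}" unfolding C_def by auto
      have fVA: "finite (V - A)" using finV by auto
      have kB: "card (V - B) < card (V - A)" using VB False by simp
      have kC: "card (V - C) < card (V - A)" using VC z fVA False by simp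
      have "real (card (V - B)) < K" using kB less.prems(2) by linarith
      hence BO: "B \<in> Or" using less.hyps[OF kB BS] by simp
      have "real (card (V - C)) < K" using kC less.prems(2) by linarith
      hence CO: "C \<in> Or" using less.hyps[OF kC CS] by simp
      have "(V - A) \<inter> B \<inter> C = {}" unfolding B_def C_def by auto
      then show False using tri[OF D BO CO] a2 by simp
    qed
  qed
qed

lemma H_in: assumes T: "is_tangle V S a Or" and V1O: "V1 \<in> Or"
  shows "A \<in> S \<Longrightarrow> real (card (V1 - A)) + real (card (A \<inter> V2)) < HH \<Longrightarrow> A \<in> Or"
proof (induction "card (V1 - A)" arbitrary: A rule: less_induct)
  case (less A)
  have orient: "is_orientation V S Or" and tri: "\<And>X Y Z. X \<in> Or \<Longrightarrow> Y \<in> Or \<Longrightarrow> Z \<in> Or \<Longrightarrow> a \<le> card (X \<inter> Y \<inter> Z)"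
    using T unfolding is_tangle_def by auto
  show ?case
  proof (rule ccontr)
    assume nA: "A \<notin> Or"
    have D: "V - A \<in> Or" using orient less.prems nA unfolding is_orientation_def by blast
    have A: "A \<subseteq> V" and cA: "cf p q m (card (A \<inter> V1)) (card (A \<inter> V2)) \<le> Psi" using less.prems inS by auto
    have DV: "(V - A) \<inter> V1 \<inter> V1 = V1 - A" by auto
    show False
    proof (cases "card (V1 - A) \<le> 1")
      case True
      have "a \<le> card ((V - A) \<inter> V1 \<inter> V1)" using tri[OF D V1O V1O] .
      then show False using True a2 DV by simp
    next
      case False
      then obtain z where z: "z \<in> V1 - A" by (metis card.empty empty_iff le0 not_less_eq_eq One_nat_def ex_in_conv)
      define B where "B = V1 - {z}"
      define C where "C = (V1 \<inter> A) \<union> {z}"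
      have fVA: "finite (V1 - A)" using fin1 by auto
      have VB: "V1 - B = {z}" using z unfolding B_def by auto
      have VC: "V1 - C = (V1 - A) - {z}" unfolding C_def by auto
      have kB: "card (V1 - B) < card (V1 - A)" using VB False by simp
      have kC: "card (V1 - C) < card (V1 - A)" using VC z fVA False by simp
      have B2: "B \<inter> V2 = {}" "C \<inter> V2 = {}" using disj z unfolding B_def C_def by auto
      have BS: "B \<in> S" unfolding inS
        using mono_setH[of B A] kB less.prems(2) cA unfolding B_def by auto
      have CS: "C \<in> S" unfolding inS
        using mono_setH[of C A] kC less.prems(2) cA z unfolding C_def by auto
      have "real (card (V1 - B)) + real (card (B \<inter> V2)) < HH"
        using kB less.prems(2) B2 by simp
      hence BO: "B \<in> Or" using less.hyps[OF kB BS] by simp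
      have "real (card (V1 - C)) + real (card (C \<inter> V2)) < HH"
        using kC less.prems(2) B2 by simp
      hence CO: "C \<in> Or" using less.hyps[OF kC CS] by simp
      have "(V - A) \<inter> B \<inter> C = {}" unfolding B_def C_def by auto
      then show False using tri[OF D BO CO] a2 by simp
    qed
  qed
qed

lemma unique: assumes T: "is_tangle V S a Or" and V1O: "V1 \<in> Or"
  shows "Or = O1"
proof -
  have orient: "is_orientation V S Or" using T unfolding is_tangle_def by auto
  have sub: "O1 \<subseteq> Or"
  proof
    fix A assume A: "A \<in> O1"
    have AS: "A \<in> S" using A unfolding induced_orientation_def by auto
    have "2 * card (A \<inter> V1) > m" using A c1 unfolding induced_orientation_def by auto
    hence "real m \<le> 2 * real (card (A \<inter> V1))" by linarith
    from dich[OF AS this] show "A \<in> Or"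
      using F_in[OF T AS] H_in[OF T V1O AS] by auto
  qed
  moreover have "Or \<subseteq> O1"
  proof
    fix A assume A: "A \<in> Or"
    have AS: "A \<in> S" using A orient unfolding is_orientation_def by auto
    show "A \<in> O1"
    proof (rule ccontr)
      assume "A \<notin> O1"
      hence "V - A \<in> O1" using O1_orient AS unfolding is_orientation_def by blast
      hence "V - A \<in> Or" using sub by auto
      then show False using A AS orient unfolding is_orientation_def by blast
    qed
  qed
  ultimately show ?thesis by auto
qed

lemma V1S: "V1 \<in> S"
proof -
  have "V1 \<inter> V1 = V1" "V1 \<inter> V2 = {}" using disj by auto
  hence "cf p q m (card (V1 \<inter> V1)) (card (V1 \<inter> V2)) = q * (real m)^2"
    using c1 by (simp add: cf_def power2_eq_square)
  then show ?thesis unfolding inS using Psi1 by auto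
qed

lemma V1O1: "V1 \<in> O1"
  using V1S am c1 unfolding induced_orientation_def by auto

end

lemma weight_sym: "sbm_weight V2 V1 p q = sbm_weight V1 V2 p q"
  by (auto simp: sbm_weight_def fun_eq_iff)

lemma small_a:
  fixes m R a :: real
  assumes "0 \<le> R" "R \<le> m" "m \<le> a" "0 \<le> a"
  shows "(m+R-a)*(2*m+2*R+a) \<le> 9*R*m"
proof (cases "m + R - a \<le> 0")
  case True
  have "2*m+2*R+a \<ge> 0" using assms by linarith
  hence "(m+R-a)*(2*m+2*R+a) \<le> 0" using True by (simp add: mult_nonpos_nonneg)
  moreover have "9*R*m \<ge> 0" using assms by simp
  ultimately show ?thesis by linarith
next
  case False
  have "(m+R-a)*(2*m+2*R+a) \<le> R*(2*m+2*R+a)"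
    using False assms by (intro mult_right_mono) auto
  also have "\<dots> \<le> R*(6*m)" using assms False by (intro mult_left_mono) auto
  also have "\<dots> \<le> 9*R*m" using assms by simp
  finally show ?thesis .
qed

theorem theorem2:
  fixes V1 V2 :: "'v set" and n a :: nat and p q \<Psi> :: real
  assumes "even n"
    and "finite V1" and "finite V2" and "V1 \<inter> V2 = {}"
    and "card V1 = n div 2" and "card V2 = n div 2"
    and "0 \<le> q" and "q < p" and "p \<le> 1"
    and "a \<ge> 2"
    and "p > 3 * q * real n / (real n - 2 * real a)"
    and "q * (real n / 2)^2 \<le> \<Psi>"
    and "\<Psi> < (real n)^2 / 4 * p *
           ((1/3) * (1 + q/p) * ((1 + q/p) - 2 * real a / real n)
            - (1/9) * ((1 + q/p) - 2 * real a / real n)^2)"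
  shows "let V = V1 \<union> V2; S = psi_sides V (sbm_weight V1 V2 p q) \<Psi>;
             O1 = induced_orientation S V1; O2 = induced_orientation S V2
         in O1 \<noteq> O2 \<and> {Or. is_tangle V S a Or} = {O1, O2}"
proof -
  note hyp = assms
  define m where "m = n div 2"
  have n2: "n = 2*m" using hyp(1) unfolding m_def by simp
  have rn: "real n = 2 * real m" using n2 by simp
  have p0: "p > 0" using hyp(7,8) by linarith
  have Psi1: "q * (real m)^2 \<le> \<Psi>" using hyp(12) rn by simp
  have m0: "m > 0"
  proof (rule ccontr)
    assume "\<not> m > 0"
    hence "m = 0" by simp
    hence "\<Psi> < 0" using hyp(13) n2 by simp
    moreover have "\<Psi> \<ge> 0" using Psi1 \<open>m = 0\<close> by simp
    ultimately show False by simp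
  qed
  define R where "R = q * real m / p"
  have qm: "q * real m = p * R" using p0 by (simp add: R_def)
  have R0: "0 \<le> R" using hyp(7) p0 unfolding R_def by simp
  have Rm: "R \<le> real m"
  proof -
    have "q * real m \<le> p * real m" using hyp(8) by (intro mult_right_mono) auto
    hence "p * R \<le> p * real m" using qm by simp
    then show ?thesis using p0 by simp
  qed
  have qp: "q/p = R / real m" using m0 p0 unfolding R_def by (simp add: field_simps)
  have bound: "(real n)^2 / 4 * p *
           ((1/3) * (1 + q/p) * ((1 + q/p) - 2 * real a / real n)
            - (1/9) * ((1 + q/p) - 2 * real a / real n)^2)
         = p*(real m+R-real a)*(2*real m+2*R+real a)/9"
    unfolding qp rn using m0 by (simp add: field_simps power2_eq_square; simp add: algebra_simps)
  have Psi2: "\<Psi> < p*(real m+R-real a)*(2*real m+2*R+real a)/9" using hyp(13)[unfolded bound] .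
  have R1: "3*R < real m - real a"
  proof (cases "a < m")
    case True
    have pos: "real n - 2 * real a > 0" using True rn by simp
    have "3 * q * real n < p * (real n - 2 * real a)" using hyp(11) pos by (simp add: field_simps)
    hence "6 * (q * real m) < 2 * p * (real m - real a)" using rn by (simp add: algebra_simps)
    hence "6 * (p * R) < 2 * p * (real m - real a)" using qm by simp
    hence "p * (3 * R) < p * (real m - real a)" by (simp add: algebra_simps)
    then show ?thesis using p0 by simp
  next
    case False
    have "(real m+R-real a)*(2*real m+2*R+real a) \<le> 9*R*real m"
      using False R0 Rm by (intro small_a) auto
    hence "p*((real m+R-real a)*(2*real m+2*R+real a)) \<le> p*(9*R*real m)"
      using p0 by (intro mult_left_mono) auto
    moreover have "q * (real m)^2 = p*(9*R*real m)/9"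
      by (simp add: power2_eq_square qm[symmetric])
    ultimately have "p*(real m+R-real a)*(2*real m+2*R+real a)/9 \<le> q * (real m)^2"
      by (simp add: divide_right_mono mult.assoc)
    then show ?thesis using Psi1 Psi2 by linarith
  qed
  interpret s1: sbm V1 V2 p q \<Psi> R m a
    by unfold_locales (use hyp m_def qm R0 R1 Psi1 Psi2 in auto)
  interpret s2: sbm V2 V1 p q \<Psi> R m a
    by unfold_locales (use hyp m_def qm R0 R1 Psi1 Psi2 in auto)
  have U: "V2 \<union> V1 = V1 \<union> V2" by blast
  note W = weight_sym[of V2 V1 p q]
  define V where "V = V1 \<union> V2"
  define S where "S = psi_sides V (sbm_weight V1 V2 p q) \<Psi>"
  have t1: "is_tangle V S a (induced_orientation S V1)" using s1.O1_tangle unfolding V_def S_def .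
  have t2: "is_tangle V S a (induced_orientation S V2)" using s2.O1_tangle unfolding V_def S_def U W .
  have u1: "\<And>Or. is_tangle V S a Or \<Longrightarrow> V1 \<in> Or \<Longrightarrow> Or = induced_orientation S V1"
    using s1.unique unfolding V_def S_def by blast
  have u2: "\<And>Or. is_tangle V S a Or \<Longrightarrow> V2 \<in> Or \<Longrightarrow> Or = induced_orientation S V2"
    using s2.unique unfolding V_def S_def U W by blast
  have V1S: "V1 \<in> S" using s1.V1S unfolding V_def S_def .
  have V1O: "V1 \<in> induced_orientation S V1" using s1.V1O1 unfolding V_def S_def .
  have V1nO: "V1 \<notin> induced_orientation S V2" using hyp(4) unfolding induced_orientation_def by auto
  have VV1: "V - V1 = V2" using hyp(4) unfolding V_def by blast
  have "{Or. is_tangle V S a Or} = {induced_orientation S V1, induced_orientation S V2}"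
  proof
    show "{Or. is_tangle V S a Or} \<subseteq> {induced_orientation S V1, induced_orientation S V2}"
    proof
      fix Or assume "Or \<in> {Or. is_tangle V S a Or}"
      hence T: "is_tangle V S a Or" by simp
      hence "(V1 \<in> Or) \<noteq> (V - V1 \<in> Or)" using V1S unfolding is_tangle_def is_orientation_def by blast
      hence "V1 \<in> Or \<or> V2 \<in> Or" using VV1 by auto
      then show "Or \<in> {induced_orientation S V1, induced_orientation S V2}" using u1[OF T] u2[OF T] by auto
    qed
  next
    show "{induced_orientation S V1, induced_orientation S V2} \<subseteq> {Or. is_tangle V S a Or}"
      using t1 t2 by auto
  qed
  moreover have "induced_orientation S V1 \<noteq> induced_orientation S V2" using V1O V1nO by auto
  ultimately show ?thesis unfolding Let_def V_def S_def by simp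
qed

end
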